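(* For every $\gamma\in[0,1)$, every $\epsilon\ge 0$, $\Delta\ge 0$ and every integer $k\ge 1$, there exist a deterministic MDP with discount factor $\gamma$ and $k+1$ states, an initial value $v_0$ with $\operatorname{span}(v_*-v_0)=\Delta$, error terms $\epsilon_1,\dots,\epsilon_{k-1}$ with $\operatorname{span}(\epsilon_j)\le\epsilon$, and a run of Approximate Value Iteration with these errors such that some policy $\pi_k$ greedy with respect to $v_{k-1}$ satisfies $$\|v_*-v_{\pi_k}\|_\infty = \frac{1}{1-\gamma}\left(\frac{\gamma-\gamma^k}{1-\gamma}\,\epsilon+\gamma^k\Delta\right).$$
   Context: A Markov Decision Process with finite state space $S$, finite action space $A$, reward function $r(s,a)$, transition probabilities $p(s'|s,a)$ and discount factor $\gamma\in[0,1)$. For a (deterministic, stationary) policy $\pi:S\to A$, let $r_\pi(s)=r(s,\pi(s))$, let $P_\pi$ be the stochastic matrix $P_\pi(s,s')=p(s'|s,\pi(s))$, and let $T_\pi v=r_\pi+\gamma P_\pi v$ be the Bellman operator of $\pi$; $v_\pi$ is its unique fixed point (the expected $\gamma$-discounted total reward of $\pi$). The Bellman optimality operator is $Tv=\max_\pi T_\pi v$ (componentwise), $v_*$ is its fixed point (the optimal value), and a policy $\pi$ is greedy with respect to $v$ if $T_\pi v=Tv$. For a function $f:S\to\mathbb R$, $\operatorname{span}(f)=\max_s f(s)-\min_s f(s)$. Approximate Value Iteration: starting from an arbitrary $v_0:S\to\mathbb R$, for $j\ge 0$ pick any policy $\pi_{j+1}$ greedy with respect to $v_j$ and set $v_{j+1}=T_{\pi_{j+1}}v_j+\epsilon_{j+1}$,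 where $\epsilon_{j+1}:S\to\mathbb R$ are arbitrary error terms. *)

theory Defs
  imports Complex_Main
begin

text \<open>Value functions are functions nat => real, only their values on S matter.\<close>

definition is_mdp :: "nat set \<Rightarrow> nat set \<Rightarrow> (nat \<Rightarrow> nat \<Rightarrow> real) \<Rightarrow> (nat \<Rightarrow> nat \<Rightarrow> nat \<Rightarrow> real) \<Rightarrow> bool" where
  "is_mdp S A r p \<longleftrightarrow> finite S \<and> S \<noteq> {} \<and> finite A \<and> A \<noteq> {} \<and>
     (\<forall>s\<in>S. \<forall>a\<in>A. (\<forall>t\<in>S. 0 \<le> p s a t) \<and> (\<Sum>t\<in>S. p s a t) = 1)"

definition deterministic_mdp :: "nat set \<Rightarrow> nat set \<Rightarrow> (nat \<Rightarrow> nat \<Rightarrow> real) \<Rightarrow> (nat \<Rightarrow> nat \<Rightarrow> nat \<Rightarrow> real) \<Rightarrow> bool" where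
  "deterministic_mdp S A r p \<longleftrightarrow> is_mdp S A r p \<and>
     (\<forall>s\<in>S. \<forall>a\<in>A. \<exists>s'\<in>S. \<forall>t\<in>S. p s a t = (if t = s' then 1 else 0))"

definition is_policy :: "nat set \<Rightarrow> nat set \<Rightarrow> (nat \<Rightarrow> nat) \<Rightarrow> bool" where
  "is_policy S A \<pi> \<longleftrightarrow> (\<forall>s\<in>S. \<pi> s \<in> A)"

definition bellman_pi :: "nat set \<Rightarrow> (nat \<Rightarrow> nat \<Rightarrow> real) \<Rightarrow> (nat \<Rightarrow> nat \<Rightarrow> nat \<Rightarrow> real) \<Rightarrow> real \<Rightarrow> (nat \<Rightarrow> nat) \<Rightarrow> (nat \<Rightarrow> real) \<Rightarrow> nat \<Rightarrow> real" where
  "bellman_pi S r p g \<pi> v s = r s (\<pi> s) + g * (\<Sum>t\<in>S. p s (\<pi> s) t * v t)"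

definition bellman_opt :: "nat set \<Rightarrow> nat set \<Rightarrow> (nat \<Rightarrow> nat \<Rightarrow> real) \<Rightarrow> (nat \<Rightarrow> nat \<Rightarrow> nat \<Rightarrow> real) \<Rightarrow> real \<Rightarrow> (nat \<Rightarrow> real) \<Rightarrow> nat \<Rightarrow> real" where
  "bellman_opt S A r p g v s = Max ((\<lambda>a. r s a + g * (\<Sum>t\<in>S. p s a t * v t)) ` A)"

definition value_pi :: "nat set \<Rightarrow> (nat \<Rightarrow> nat \<Rightarrow> real) \<Rightarrow> (nat \<Rightarrow> nat \<Rightarrow> nat \<Rightarrow> real) \<Rightarrow> real \<Rightarrow> (nat \<Rightarrow> nat) \<Rightarrow> nat \<Rightarrow> real" where
  "value_pi S r p g \<pi> = (THE v. (\<forall>s\<in>S. bellman_pi S r p g \<pi> v s = v s) \<and> (\<forall>s. s \<notin> S \<longrightarrow> v s = 0))"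

definition value_opt :: "nat set \<Rightarrow> nat set \<Rightarrow> (nat \<Rightarrow> nat \<Rightarrow> real) \<Rightarrow> (nat \<Rightarrow> nat \<Rightarrow> nat \<Rightarrow> real) \<Rightarrow> real \<Rightarrow> nat \<Rightarrow> real" where
  "value_opt S A r p g = (THE v. (\<forall>s\<in>S. bellman_opt S A r p g v s = v s) \<and> (\<forall>s. s \<notin> S \<longrightarrow> v s = 0))"

definition greedy :: "nat set \<Rightarrow> nat set \<Rightarrow> (nat \<Rightarrow> nat \<Rightarrow> real) \<Rightarrow> (nat \<Rightarrow> nat \<Rightarrow> nat \<Rightarrow> real) \<Rightarrow> real \<Rightarrow> (nat \<Rightarrow> nat) \<Rightarrow> (nat \<Rightarrow> real) \<Rightarrow> bool" where
  "greedy S A r p g \<pi> v \<longleftrightarrow> is_policy S A \<pi> \<and>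
     (\<forall>s\<in>S. bellman_pi S r p g \<pi> v s = bellman_opt S A r p g v s)"

definition span_on :: "nat set \<Rightarrow> (nat \<Rightarrow> real) \<Rightarrow> real" where
  "span_on S f = Max (f ` S) - Min (f ` S)"

definition sup_norm_on :: "nat set \<Rightarrow> (nat \<Rightarrow> real) \<Rightarrow> real" where
  "sup_norm_on S f = Max ((\<lambda>s. \<bar>f s\<bar>) ` S)"

end

theory Submission
  imports Defs
begin

definition nx :: "nat \<Rightarrow> nat \<Rightarrow> nat \<Rightarrow> nat" where
  "nx k s a = (if s = k \<and> a = 1 then k else s - 1)"
definition pp :: "nat \<Rightarrow> nat \<Rightarrow> nat \<Rightarrow> nat \<Rightarrow> real" where
  "pp k s a t = (if t = nx k s a then 1 else 0)"
definition rr :: "nat \<Rightarrow> real \<Rightarrow> nat \<Rightarrow> nat \<Rightarrow> real" where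
  "rr k C s a = (if s = k \<and> a = 1 then - C else 0)"

lemma nx_le: "s \<le> k \<Longrightarrow> nx k s a \<le> k"
  by (auto simp: nx_def)

lemma sum_pp: "s \<le> k \<Longrightarrow> (\<Sum>t\<in>{..k}. pp k s a t * v t) = v (nx k s a)"
proof -
  assume "s \<le> k"
  hence n: "nx k s a \<in> {..k}" using nx_le by auto
  have "(\<Sum>t\<in>{..k}. pp k s a t * v t) = (\<Sum>t\<in>{..k}. if t = nx k s a then v t else 0)"
    by (rule sum.cong) (auto simp: pp_def)
  also have "\<dots> = v (nx k s a)" using n by (simp add: sum.delta)
  finally show ?thesis .
qed

lemma sum_pp1: "s \<le> k \<Longrightarrow> (\<Sum>t\<in>{..k}. pp k s a t) = 1"
  using sum_pp[of s k a "\<lambda>_. 1"] by simp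

lemma bpi: "s \<le> k \<Longrightarrow> bellman_pi {..k} (rr k C) (pp k) g \<pi> v s = rr k C s (\<pi> s) + g * v (nx k s (\<pi> s))"
  by (simp add: bellman_pi_def sum_pp)

lemma bopt: "s \<le> k \<Longrightarrow> bellman_opt {..k} {0,1} (rr k C) (pp k) g v s =
   max (rr k C s 0 + g * v (nx k s 0)) (rr k C s 1 + g * v (nx k s 1))"
  by (simp add: bellman_opt_def sum_pp)

lemma bopt': "s \<le> k \<Longrightarrow> bellman_opt {..k} {0, Suc 0} (rr k C) (pp k) g v s =
   max (rr k C s 0 + g * v (nx k s 0)) (rr k C s (Suc 0) + g * v (nx k s (Suc 0)))"
  using bopt[of s k C g v] by (simp only: One_nat_def)

lemma det: "deterministic_mdp {..k} {0,1} (rr k C) (pp k)"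
  unfolding deterministic_mdp_def is_mdp_def
proof (intro conjI ballI)
  fix s a assume "s \<in> {..k}" "a \<in> {0::nat,1}"
  thus "\<exists>s'\<in>{..k}. \<forall>t\<in>{..k}. pp k s a t = (if t = s' then 1 else 0)"
    using nx_le[of s k a] by (auto simp: pp_def)
qed (auto simp: pp_def[symmetric] sum_pp1, auto simp: pp_def)

lemma vopt:
  assumes "0 \<le> g" "g < 1" "0 \<le> C" "1 \<le> k"
  shows "value_opt {..k} {0,1} (rr k C) (pp k) g = (\<lambda>s. 0)"
  unfolding value_opt_def
proof (rule the_equality)
  show "(\<forall>s\<in>{..k}. bellman_opt {..k} {0,1} (rr k C) (pp k) g (\<lambda>s. 0) s = 0) \<and> (\<forall>s. s \<notin> {..k} \<longrightarrow> 0 = (0::real))"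
    using assms by (auto simp: bopt bopt' rr_def)
next
  fix v assume H: "(\<forall>s\<in>{..k}. bellman_opt {..k} {0,1} (rr k C) (pp k) g v s = v s) \<and> (\<forall>s. s \<notin> {..k} \<longrightarrow> v s = 0)"
  have F: "s \<le> k \<Longrightarrow> max (rr k C s 0 + g * v (nx k s 0)) (rr k C s 1 + g * v (nx k s 1)) = v s" for s
    using H bopt[of s k C g v] by auto
  have low: "s < k \<Longrightarrow> v s = 0" for s
  proof (induction s)
    case 0
    have "v 0 = g * v 0" using F[of 0] 0 by (simp add: rr_def nx_def)
    hence "(1 - g) * v 0 = 0" by (simp add: algebra_simps)
    thus ?case using assms by simp
  next
    case (Suc s)
    thus ?case using F[of "Suc s"] by (simp add: rr_def nx_def)
  qed
  have vk1: "v (k - 1) = 0" using low assms by simp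
  have "max (g * v (k-1)) (- C + g * v k) = v k" using F[of k] assms by (simp add: rr_def nx_def)
  hence e: "max 0 (- C + g * v k) = v k" using vk1 by simp
  have "v k = 0"
  proof (cases "- C + g * v k \<le> 0")
    case True thus ?thesis using e by simp
  next
    case False
    hence "v k = - C + g * v k" using e by simp
    hence "(1 - g) * v k = - C" by (simp add: algebra_simps)
    moreover have "v k > 0" using False e by simp
    moreover have "(1 - g) * v k > 0" using \<open>v k > 0\<close> assms by (simp add: mult_pos_pos)
    ultimately show ?thesis using assms by linarith
  qed
  thus "v = (\<lambda>s. 0)" using low H
    by (metis atMost_iff le_neq_implies_less)
qed

lemma vpi:
  assumes "0 \<le> g" "g < 1" "1 \<le> k"
  shows "value_pi {..k} (rr k C) (pp k) g (\<lambda>s. 1) = (\<lambda>s. if s = k then - C / (1 - g) else 0)"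
  unfolding value_pi_def
proof (rule the_equality)
  show "(\<forall>s\<in>{..k}. bellman_pi {..k} (rr k C) (pp k) g (\<lambda>s. 1) (\<lambda>s. if s = k then - C / (1 - g) else 0) s = (if s = k then - C / (1 - g) else 0))
     \<and> (\<forall>s. s \<notin> {..k} \<longrightarrow> (if s = k then - C / (1 - g) else 0) = 0)"
    using assms by (auto simp: bpi rr_def nx_def field_simps)
next
  fix v assume H: "(\<forall>s\<in>{..k}. bellman_pi {..k} (rr k C) (pp k) g (\<lambda>s. 1) v s = v s) \<and> (\<forall>s. s \<notin> {..k} \<longrightarrow> v s = 0)"
  have F: "s \<le> k \<Longrightarrow> rr k C s 1 + g * v (nx k s 1) = v s" for s
    using H bpi[of s k C g "\<lambda>s. 1" v] by auto
  have low: "s < k \<Longrightarrow> v s = 0" for s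
  proof (induction s)
    case 0
    have "v 0 = g * v 0" using F[of 0] 0 by (simp add: rr_def nx_def)
    hence "(1 - g) * v 0 = 0" by (simp add: algebra_simps)
    thus ?case using assms by simp
  next
    case (Suc s)
    thus ?case using F[of "Suc s"] by (simp add: rr_def nx_def)
  qed
  have "- C + g * v k = v k" using F[of k] by (simp add: rr_def nx_def)
  hence "v k = - C / (1 - g)" using assms by (simp add: field_simps) 
  thus "v = (\<lambda>s. if s = k then - C / (1 - g) else 0)" using low H
    by (metis atMost_iff le_neq_implies_less)
qed


theorem proposition1:
  fixes g \<epsilon> \<Delta> :: real and k :: nat
  assumes "0 \<le> g" "g < 1" "0 \<le> \<epsilon>" "0 \<le> \<Delta>" "1 \<le> k"
  shows "\<exists>(A :: nat set) (r :: nat \<Rightarrow> nat \<Rightarrow> real) (p :: nat \<Rightarrow> nat \<Rightarrow> nat \<Rightarrow> real)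
            (v :: nat \<Rightarrow> nat \<Rightarrow> real) (err :: nat \<Rightarrow> nat \<Rightarrow> real) (\<pi> :: nat \<Rightarrow> nat \<Rightarrow> nat).
    deterministic_mdp {..k} A r p \<and>
    span_on {..k} (\<lambda>s. value_opt {..k} A r p g s - v 0 s) = \<Delta> \<and>
    (\<forall>j\<in>{1..k-1}. span_on {..k} (err j) \<le> \<epsilon>) \<and>
    (\<forall>j. j + 1 \<le> k - 1 \<longrightarrow>
        greedy {..k} A r p g (\<pi> (j + 1)) (v j) \<and>
        (\<forall>s\<in>{..k}. v (j + 1) s = bellman_pi {..k} r p g (\<pi> (j + 1)) (v j) s + err (j + 1) s)) \<and>
    greedy {..k} A r p g (\<pi> k) (v (k - 1)) \<and>
    sup_norm_on {..k} (\<lambda>s. value_opt {..k} A r p g s - value_pi {..k} r p g (\<pi> k) s)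
      = 1 / (1 - g) * ((g - g ^ k) / (1 - g) * \<epsilon> + g ^ k * \<Delta>)"
proof -
  define C where "C = (g - g ^ k) / (1 - g) * \<epsilon> + g ^ k * \<Delta>"
  define f where "f = (\<lambda>j::nat. g ^ j * \<Delta> + (1 - g ^ j) / (1 - g) * \<epsilon>)"
  define v where "v = (\<lambda>(j::nat) s. if s = j + 1 then f j else (0::real))"
  define err where "err = (\<lambda>(j::nat) (s::nat). if s = j + 1 then \<epsilon> else (0::real))"
  define \<pi> where "\<pi> = (\<lambda>(j::nat) (s::nat). if j = k then 1 else (0::nat))"
  have g1: "1 - g > 0" using assms by simp
  have fpos: "f j \<ge> 0" for j
  proof -
    have "g ^ j \<le> 1" using assms by (simp add: power_le_one)
    thus ?thesis unfolding f_def using assms g1 by (intro add_nonneg_nonneg) auto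
  qed
  have frec: "f (j + 1) = g * f j + \<epsilon>" for j
    unfolding f_def using g1 by (simp add: field_simps)
  have Cf: "C = g * f (k - 1)"
  proof -
    have "g * g ^ (k - 1) = g ^ k" using assms by (metis Suc_diff_le diff_Suc_1 power_Suc)
    thus ?thesis unfolding C_def f_def using g1 by (simp add: field_simps)
  qed
  have C0: "C \<ge> 0" using Cf fpos assms by simp
  have VO: "value_opt {..k} {0,1} (rr k C) (pp k) g = (\<lambda>s. 0)" using vopt assms C0 by simp
  have VP: "value_pi {..k} (rr k C) (pp k) g (\<pi> k) = (\<lambda>s. if s = k then - C / (1 - g) else 0)"
    using vpi[of g k C] assms by (simp add: \<pi>_def)
  have c1: "deterministic_mdp {..k} {0,1} (rr k C) (pp k)" by (rule det)
  have c2: "span_on {..k} (\<lambda>s. value_opt {..k} {0,1} (rr k C) (pp k) g s - v 0 s) = \<Delta>"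
  proof -
    have im: "(\<lambda>s. value_opt {..k} {0,1} (rr k C) (pp k) g s - v 0 s) ` {..k} = {0, - \<Delta>}"
    proof
      show "(\<lambda>s. value_opt {..k} {0,1} (rr k C) (pp k) g s - v 0 s) ` {..k} \<subseteq> {0, - \<Delta>}"
        by (auto simp: VO VO[simplified] v_def f_def)
      have "0 \<in> (\<lambda>s. value_opt {..k} {0,1} (rr k C) (pp k) g s - v 0 s) ` {..k}"
        by (rule image_eqI[of _ _ 0]) (auto simp: VO VO[simplified] v_def)
      moreover have "- \<Delta> \<in> (\<lambda>s. value_opt {..k} {0,1} (rr k C) (pp k) g s - v 0 s) ` {..k}"
        by (rule image_eqI[of _ _ 1]) (use assms in \<open>auto simp: VO VO[simplified] v_def f_def\<close>)
      ultimately show "{0, - \<Delta>} \<subseteq> (\<lambda>s. value_opt {..k} {0,1} (rr k C) (pp k) g s - v 0 s) ` {..k}" by auto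
    qed
    show ?thesis unfolding span_on_def im using assms by (simp add: max_def min_def)
  qed
  have c3: "\<forall>j\<in>{1..k-1}. span_on {..k} (err j) \<le> \<epsilon>"
  proof
    fix j assume j: "j \<in> {1..k-1}"
    have im: "err j ` {..k} = {0, \<epsilon>}"
    proof
      show "err j ` {..k} \<subseteq> {0, \<epsilon>}" by (auto simp: err_def)
      have "0 \<in> err j ` {..k}" by (rule image_eqI[of _ _ 0]) (auto simp: err_def)
      moreover have "\<epsilon> \<in> err j ` {..k}" by (rule image_eqI[of _ _ "j+1"]) (use j in \<open>auto simp: err_def\<close>)
      ultimately show "{0, \<epsilon>} \<subseteq> err j ` {..k}" by auto
    qed
    show "span_on {..k} (err j) \<le> \<epsilon>" unfolding span_on_def im using assms by (simp add: max_def min_def)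
  qed
  have c4: "\<forall>j. j + 1 \<le> k - 1 \<longrightarrow>
        greedy {..k} {0,1} (rr k C) (pp k) g (\<pi> (j + 1)) (v j) \<and>
        (\<forall>s\<in>{..k}. v (j + 1) s = bellman_pi {..k} (rr k C) (pp k) g (\<pi> (j + 1)) (v j) s + err (j + 1) s)"
  proof (intro allI impI conjI)
    fix j assume j: "j + 1 \<le> k - 1"
    have pj: "\<pi> (j+1) = (\<lambda>s. 0)" using j assms by (auto simp: \<pi>_def)
    show "greedy {..k} {0,1} (rr k C) (pp k) g (\<pi> (j + 1)) (v j)"
      unfolding greedy_def is_policy_def
    proof (intro conjI ballI)
      fix s assume s: "s \<in> {..k}"
      show "bellman_pi {..k} (rr k C) (pp k) g (\<pi> (j + 1)) (v j) s = bellman_opt {..k} {0, 1} (rr k C) (pp k) g (v j) s"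
      proof (cases "s = k")
        case True
        have "k \<noteq> j + 1" using j assms by arith
        hence "v j k = 0" by (simp add: v_def)
        moreover have "v j (k - 1) \<ge> 0" using fpos by (simp add: v_def)
        moreover have P: "g * v j (k - Suc 0) \<ge> 0" using calculation assms by simp
        ultimately show ?thesis using s True pj C0 assms
          apply (simp add: bpi bopt bopt' rr_def nx_def max_def)
          using P C0 by linarith
      next
        case False
        thus ?thesis using s pj by (simp add: bpi bopt bopt' rr_def nx_def)
      qed
    qed (simp add: \<pi>_def)
    show "\<forall>s\<in>{..k}. v (j + 1) s = bellman_pi {..k} (rr k C) (pp k) g (\<pi> (j + 1)) (v j) s + err (j + 1) s"
    proof
      fix s assume s: "s \<in> {..k}"
      have "s - 1 = j + 1 \<longleftrightarrow> s = j + 2" by auto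
      thus "v (j + 1) s = bellman_pi {..k} (rr k C) (pp k) g (\<pi> (j + 1)) (v j) s + err (j + 1) s"
        using s pj frec[of j] by (auto simp: bpi rr_def nx_def v_def err_def)
    qed
  qed
  have c5: "greedy {..k} {0,1} (rr k C) (pp k) g (\<pi> k) (v (k - 1))"
    unfolding greedy_def is_policy_def
  proof (intro conjI ballI)
    fix s assume s: "s \<in> {..k}"
    have pk: "\<pi> k = (\<lambda>s. 1)" by (simp add: \<pi>_def)
    have vk: "v (k - 1) = (\<lambda>s. if s = k then f (k - 1) else 0)" using assms by (auto simp: v_def)
    show "bellman_pi {..k} (rr k C) (pp k) g (\<pi> k) (v (k - 1)) s = bellman_opt {..k} {0, 1} (rr k C) (pp k) g (v (k - 1)) s"
    proof (cases "s = k")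
      case True
      have "k - Suc 0 \<noteq> k" using assms by arith
      thus ?thesis using True s pk vk Cf assms by (simp add: bpi bopt bopt' rr_def nx_def)
    next
      case False
      thus ?thesis using s pk by (simp add: bpi bopt bopt' rr_def nx_def)
    qed
  qed (simp add: \<pi>_def)
  have c6: "sup_norm_on {..k} (\<lambda>s. value_opt {..k} {0,1} (rr k C) (pp k) g s - value_pi {..k} (rr k C) (pp k) g (\<pi> k) s)
      = 1 / (1 - g) * ((g - g ^ k) / (1 - g) * \<epsilon> + g ^ k * \<Delta>)"
  proof -
    have "sup_norm_on {..k} (\<lambda>s. value_opt {..k} {0,1} (rr k C) (pp k) g s - value_pi {..k} (rr k C) (pp k) g (\<pi> k) s) = C / (1 - g)"
      unfolding sup_norm_on_def VO VP
    proof (rule Max_eqI)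
      show "C / (1 - g) \<in> (\<lambda>s. \<bar>0 - (if s = k then - C / (1 - g) else 0)\<bar>) ` {..k}"
        by (rule image_eqI[of _ _ k]) (use C0 g1 in auto)
    qed (use C0 g1 in auto)
    thus ?thesis unfolding C_def by simp
  qed
  show ?thesis
    apply (rule exI[of _ "{0,1}"], rule exI[of _ "rr k C"], rule exI[of _ "pp k"],
           rule exI[of _ v], rule exI[of _ err], rule exI[of _ \<pi>])
    using c1 c2 c3 c4 c5 c6 by blast
qed

end
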